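(* Let $V=\{1,\dots,p\}$ and let $F:2^V\to\mathbb{R}$ be a submodular, nondecreasing set-function with $F(\varnothing)=0$ and $F(\{k\})>0$ for all $k\in V$. Let $f$ be the Lovász extension of $F$ and define $\Omega:\mathbb{R}^p\to\mathbb{R}$ by $\Omega(w)=f(|w|)$. Then: (i) $\Omega$ is a norm on $\mathbb{R}^p$; (ii) $\Omega$ is the convex envelope (largest convex function lying below) of the function $g:w\mapsto F(\mathrm{Supp}(w))$ on the unit $\ell_\infty$-ball $\{w\in\mathbb{R}^p:\|w\|_\infty\leqslant 1\}$; (iii) the dual norm of $\Omega$, $\Omega^\ast(s)=\max_{\Omega(w)\leqslant 1} s^\top w$, satisfies $$\Omega^\ast(s)=\max_{A\subset V,\,A\neq\varnothing}\frac{\|s_A\|_1}{F(A)}=\max_{A\in\mathcal{T}}\frac{\|s_A\|_1}{F(A)}.$$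
   Context: For $w\in\mathbb{R}^p$, $|w|$ is the vector of absolute values of its components, $\mathrm{Supp}(w)=\{j\in V: w_j\neq 0\}$, and $s_A$ is the subvector of $s$ indexed by $A$. The Lovász extension $f:\mathbb{R}_+^p\to\mathbb{R}$ of $F$ is defined as follows: for $w\in\mathbb{R}_+^p$, order the components as $w_{j_1}\geqslant\cdots\geqslant w_{j_p}\geqslant 0$ and set $f(w)=\sum_{k=1}^p w_{j_k}[F(\{j_1,\dots,j_k\})-F(\{j_1,\dots,j_{k-1}\})]$. A set $A\subset V$ is stable if for every $B\supset A$ with $B\neq A$ one has $F(B)>F(A)$. A nonempty set $A$ is separable if there is a partition $A=B_1\cup\cdots\cup B_k$ into $k\geqslant 2$ nonempty sets with $F(A)=F(B_1)+\cdots+F(B_k)$, and inseparable otherwise. $\mathcal{T}$ denotes the family of nonempty subsets of $V$ that are both stable and inseparable. *)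

theory Defs
  imports "HOL-Analysis.Analysis"
begin

text \<open>Ground set V is the (finite) index type 'n, with p = CARD('n); vectors in R^p are real^'n.\<close>

definition submodular :: "('n set \<Rightarrow> real) \<Rightarrow> bool" where
  "submodular F \<longleftrightarrow> (\<forall>A B. F (A \<union> B) + F (A \<inter> B) \<le> F A + F B)"

definition nondecreasing_setfun :: "('n set \<Rightarrow> real) \<Rightarrow> bool" where
  "nondecreasing_setfun F \<longleftrightarrow> (\<forall>A B. A \<subseteq> B \<longrightarrow> F A \<le> F B)"

text \<open>Lovasz extension: order the components decreasingly as w_{j_1} >= ... >= w_{j_p}
  (an enumeration js of V) and sum w_{j_k} (F{j_1..j_k} - F{j_1..j_{k-1}}).
  Intended for nonnegative w only.\<close>
definition lovasz_ext :: "('n::finite set \<Rightarrow> real) \<Rightarrow> real^'n \<Rightarrow> real" where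
  "lovasz_ext F w =
     (let js = (SOME js. distinct js \<and> set js = UNIV \<and> sorted_wrt (\<lambda>a b. w $ a \<ge> w $ b) js)
      in \<Sum>k<length js. w $ (js ! k) * (F (set (take (Suc k) js)) - F (set (take k js))))"

definition vabs :: "real^'n \<Rightarrow> real^'n" where
  "vabs w = (\<chi> i. \<bar>w $ i\<bar>)"

definition supp :: "real^'n \<Rightarrow> 'n set" where
  "supp w = {j. w $ j \<noteq> 0}"

definition is_norm_fun :: "(real^'n \<Rightarrow> real) \<Rightarrow> bool" where
  "is_norm_fun N \<longleftrightarrow>
     (\<forall>w. N w = 0 \<longleftrightarrow> w = 0) \<and>
     (\<forall>a w. N (a *\<^sub>R w) = \<bar>a\<bar> * N w) \<and>
     (\<forall>v w. N (v + w) \<le> N v + N w)"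

definition convex_envelope_on :: "'a::real_vector set \<Rightarrow> ('a \<Rightarrow> real) \<Rightarrow> ('a \<Rightarrow> real) \<Rightarrow> bool" where
  "convex_envelope_on S g h \<longleftrightarrow>
     convex_on S h \<and> (\<forall>w\<in>S. h w \<le> g w) \<and>
     (\<forall>h'. convex_on S h' \<and> (\<forall>w\<in>S. h' w \<le> g w) \<longrightarrow> (\<forall>w\<in>S. h' w \<le> h w))"

definition linf_ball :: "(real^'n) set" where
  "linf_ball = {w. \<forall>i. \<bar>w $ i\<bar> \<le> 1}"

definition dual_norm :: "(real^'n \<Rightarrow> real) \<Rightarrow> real^'n \<Rightarrow> real" where
  "dual_norm N s = Sup {s \<bullet> w | w. N w \<le> 1}"

definition stable_set :: "('n set \<Rightarrow> real) \<Rightarrow> 'n set \<Rightarrow> bool" where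
  "stable_set F A \<longleftrightarrow> (\<forall>B. A \<subset> B \<longrightarrow> F B > F A)"

definition separable_set :: "('n set \<Rightarrow> real) \<Rightarrow> 'n set \<Rightarrow> bool" where
  "separable_set F A \<longleftrightarrow> A \<noteq> {} \<and>
     (\<exists>P. finite P \<and> \<Union>P = A \<and> {} \<notin> P \<and> card P \<ge> 2 \<and>
          (\<forall>B\<in>P. \<forall>C\<in>P. B \<noteq> C \<longrightarrow> B \<inter> C = {}) \<and>
          F A = (\<Sum>B\<in>P. F B))"

definition inseparable_set :: "('n set \<Rightarrow> real) \<Rightarrow> 'n set \<Rightarrow> bool" where
  "inseparable_set F A \<longleftrightarrow> A \<noteq> {} \<and> \<not> separable_set F A"

definition stable_inseparable_family :: "('n set \<Rightarrow> real) \<Rightarrow> 'n set set" where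
  "stable_inseparable_family F = {A. A \<noteq> {} \<and> stable_set F A \<and> inseparable_set F A}"

end

theory Submission
  imports Defs
begin

definition sortlist :: "real^'n::finite \<Rightarrow> 'n list" where
  "sortlist w = (SOME js. distinct js \<and> set js = UNIV \<and> sorted_wrt (\<lambda>a b. w $ a \<ge> w $ b) js)"

definition ext :: "('n set \<Rightarrow> real) \<Rightarrow> 'n list \<Rightarrow> real^'n \<Rightarrow> real" where
  "ext H js v = (\<Sum>k<length js. v $ (js ! k) * (H (set (take (Suc k) js)) - H (set (take k js))))"

definition coef :: "'n list \<Rightarrow> real^'n \<Rightarrow> nat \<Rightarrow> real" where
  "coef js v k = (if k < length js then v $ (js ! k) else 0)"

lemma sortlist_props:
  fixes w :: "real^'n::finite"
  shows "distinct (sortlist w) \<and> set (sortlist w) = UNIV \<and> sorted_wrt (\<lambda>a b. w $ a \<ge> w $ b) (sortlist w)"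
proof -
  obtain xs :: "'n list" where xs: "set xs = UNIV" using finite_list[of "UNIV::'n set"] by auto
  let ?js = "sort_key (\<lambda>a. - w$a) (remdups xs)"
  have s: "sorted_wrt (\<lambda>a b. - w$a \<le> - w$b) ?js"
    using sorted_sort_key[of "\<lambda>a. - w$a" "remdups xs"] unfolding sorted_map .
  have d: "distinct ?js" by (simp only: distinct_sort distinct_remdups)
  have u: "set ?js = UNIV" by (simp only: set_sort set_remdups xs)
  have s2: "sorted_wrt (\<lambda>a b. w $ a \<ge> w $ b) ?js"
    by (rule sorted_wrt_mono_rel[OF _ s]) simp
  have "distinct ?js \<and> set ?js = UNIV \<and> sorted_wrt (\<lambda>a b. w $ a \<ge> w $ b) ?js"
    using d u s2 by blast
  then have "\<exists>js. distinct js \<and> set js = UNIV \<and> sorted_wrt (\<lambda>a b. w $ a \<ge> w $ b) js" by blast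
  from someI_ex[OF this] show ?thesis unfolding sortlist_def .
qed

lemma lovasz_alt: "lovasz_ext F w = ext F (sortlist w) w"
  by (simp add: lovasz_ext_def ext_def sortlist_def Let_def)

lemma sum_perm:
  assumes "distinct js" "set js = (UNIV::'n::finite set)"
  shows "(\<Sum>k<length js. g (js!k)) = (\<Sum>i\<in>UNIV. g i)"
  using sum.reindex_bij_betw[OF bij_betw_nth[OF assms(1) refl refl], of g] assms(2) by simp

lemma abel:
  fixes a H :: "nat \<Rightarrow> real"
  shows "(\<Sum>k<n. a k * (H (Suc k) - H k)) = (\<Sum>k<n. (a k - a (Suc k)) * H (Suc k)) + a n * H n - a 0 * H 0"
  by (induction n) (simp_all add: algebra_simps)

lemma ext_mu:
  assumes "H {} = 0"
  shows "ext H js v = (\<Sum>k<length js. (coef js v k - coef js v (Suc k)) * H (set (take (Suc k) js)))"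
proof -
  have "ext H js v = (\<Sum>k<length js. coef js v k * ((\<lambda>k. H (set (take k js))) (Suc k) - (\<lambda>k. H (set (take k js))) k))"
    unfolding ext_def by (rule sum.cong) (auto simp: coef_def)
  also have "\<dots> = (\<Sum>k<length js. (coef js v k - coef js v (Suc k)) * H (set (take (Suc k) js)))"
    using abel[of "coef js v" "\<lambda>k. H (set (take k js))" "length js"] assms by (simp add: coef_def)
  finally show ?thesis .
qed

lemma notin_take: "distinct js \<Longrightarrow> k < length js \<Longrightarrow> js ! k \<notin> set (take k js)"
  by (metis distinct_take take_Suc_conv_app_nth distinct_append disjoint_iff list.set_intros(1) set_append)

lemma set_take_Suc: "k < length js \<Longrightarrow> set (take (Suc k) js) = insert (js ! k) (set (take k js))"
  by (simp add: take_Suc_conv_app_nth)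

lemma ext_sum:
  assumes "distinct js" "set js = (UNIV::'n::finite set)"
  shows "ext (\<lambda>A. sum (($) x) A) js v = (\<Sum>i\<in>UNIV. v$i * x$i)"
proof -
  have "ext (\<lambda>A. sum (($) x) A) js v = (\<Sum>k<length js. v$(js!k) * x$(js!k))"
    unfolding ext_def
    by (rule sum.cong) (auto simp: set_take_Suc notin_take[OF assms(1)])
  also have "\<dots> = (\<Sum>i\<in>UNIV. v$i * x$i)" by (rule sum_perm[OF assms])
  finally show ?thesis .
qed

definition pos :: "'a list \<Rightarrow> 'a \<Rightarrow> nat" where
  "pos js i = the_inv_into {..<length js} ((!) js) i"

lemma pos_nth: "distinct js \<Longrightarrow> k < length js \<Longrightarrow> pos js (js!k) = k"
  unfolding pos_def
  by (rule the_inv_into_f_f) (auto intro: bij_betw_imp_inj_on[OF bij_betw_nth[OF _ refl refl]])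

definition greedy :: "('n set \<Rightarrow> real) \<Rightarrow> 'n list \<Rightarrow> real^'n" where
  "greedy F js = (\<chi> i. F (set (take (Suc (pos js i)) js)) - F (set (take (pos js i) js)))"

lemma greedy_nth: "distinct js \<Longrightarrow> k < length js \<Longrightarrow>
   greedy F js $ (js!k) = F (set (take (Suc k) js)) - F (set (take k js))"
  by (simp add: greedy_def pos_nth)

lemma greedy_ext:
  assumes "distinct js" "set js = (UNIV::'n::finite set)"
  shows "ext F js v = (\<Sum>i\<in>UNIV. v$i * greedy F js $ i)"
proof -
  have "ext F js v = (\<Sum>k<length js. v$(js!k) * greedy F js $ (js!k))"
    unfolding ext_def by (rule sum.cong) (auto simp: greedy_nth[OF assms(1)])
  also have "\<dots> = (\<Sum>i\<in>UNIV. v$i * greedy F js $ i)" by (rule sum_perm[OF assms])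
  finally show ?thesis .
qed

lemma greedy_nonneg:
  assumes "nondecreasing_setfun F" "distinct js" "set js = (UNIV::'n::finite set)"
  shows "greedy F js $ i \<ge> 0"
proof -
  have "i \<in> set js" using assms(3) by simp
  then obtain k where k: "k < length js" "i = js!k" by (auto simp: in_set_conv_nth)
  have "set (take k js) \<subseteq> set (take (Suc k) js)" by (rule set_take_subset_set_take) simp
  then show ?thesis using assms(1) k by (simp add: greedy_nth[OF assms(2)] nondecreasing_setfun_def)
qed

lemma greedy_P:
  assumes sub: "submodular F" and F0: "F {} = 0" and d: "distinct js" and u: "set js = (UNIV::'n::finite set)"
  shows "sum (($) (greedy F js)) A \<le> F A"
proof -
  let ?g = "greedy F js"
  have "sum (($) ?g) (A \<inter> set (take m js)) \<le> F (A \<inter> set (take m js))" for m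
  proof (induction m)
    case 0
    then show ?case using F0 by simp
  next
    case (Suc m)
    show ?case
    proof (cases "m < length js")
      case False
      then show ?thesis using Suc by simp
    next
      case True
      let ?T = "set (take m js)"
      let ?j = "js ! m"
      have ins: "set (take (Suc m) js) = insert ?j ?T" using True by (rule set_take_Suc)
      have nj: "?j \<notin> ?T" using notin_take[OF d True] .
      show ?thesis
      proof (cases "?j \<in> A")
        case False
        then have "A \<inter> set (take (Suc m) js) = A \<inter> ?T" using ins by auto
        then show ?thesis using Suc by simp
      next
        case jA: True
        let ?Y = "insert ?j (A \<inter> ?T)"
        have eq: "A \<inter> set (take (Suc m) js) = ?Y" using ins jA by auto
        have un: "?T \<union> ?Y = insert ?j ?T" by auto
        have it: "?T \<inter> ?Y = A \<inter> ?T" using nj by auto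
        have sm: "F (?T \<union> ?Y) + F (?T \<inter> ?Y) \<le> F ?T + F ?Y"
          using sub unfolding submodular_def by blast
        have "sum (($) ?g) ?Y = ?g $ ?j + sum (($) ?g) (A \<inter> ?T)"
          using nj by (simp add: sum.insert)
        also have "\<dots> \<le> (F (insert ?j ?T) - F ?T) + F (A \<inter> ?T)"
          using Suc greedy_nth[OF d True, of F] ins by simp
        also have "\<dots> \<le> F ?Y" using sm un it by simp
        finally show ?thesis using eq by simp
      qed
    qed
  qed
  from this[of "length js"] show ?thesis using u by simp
qed

lemma mu_nonneg:
  assumes "sorted_wrt (\<lambda>a b. v $ a \<ge> v $ b) js" "\<forall>i. v $ i \<ge> 0" "k < length js"
  shows "coef js v k - coef js v (Suc k) \<ge> 0"
proof (cases "Suc k < length js")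
  case True
  then show ?thesis using sorted_wrt_nth_less[OF assms(1), of k "Suc k"] assms by (simp add: coef_def)
next
  case False
  then show ?thesis using assms by (simp add: coef_def)
qed

lemma dominance:
  assumes F0: "F {} = 0" and d: "distinct js" and u: "set js = (UNIV::'n::finite set)"
    and so: "sorted_wrt (\<lambda>a b. v $ a \<ge> v $ b) js" and nn: "\<forall>i. v $ i \<ge> 0"
    and P: "\<forall>A. sum (($) x) A \<le> c * F A"
  shows "(\<Sum>i\<in>UNIV. v$i * x$i) \<le> c * ext F js v"
proof -
  have "(\<Sum>i\<in>UNIV. v$i * x$i) = ext (\<lambda>A. sum (($) x) A) js v" using ext_sum[OF d u] by simp
  also have "\<dots> = (\<Sum>k<length js. (coef js v k - coef js v (Suc k)) * sum (($) x) (set (take (Suc k) js)))"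
    by (rule ext_mu) simp
  also have "\<dots> \<le> (\<Sum>k<length js. (coef js v k - coef js v (Suc k)) * (c * F (set (take (Suc k) js))))"
    by (rule sum_mono, rule mult_left_mono) (use P mu_nonneg[OF so nn] in auto)
  also have "\<dots> = c * (\<Sum>k<length js. (coef js v k - coef js v (Suc k)) * F (set (take (Suc k) js)))"
    by (simp add: sum_distrib_left algebra_simps)
  also have "\<dots> = c * ext F js v" using ext_mu[of F js v, OF F0] by simp
  finally show ?thesis .
qed

lemma lov_greedy: "lovasz_ext F v = (\<Sum>i\<in>UNIV. v$i * greedy F (sortlist v) $ i)"
  using greedy_ext[of "sortlist v"] sortlist_props[of v] by (simp add: lovasz_alt)

lemma lov_dom:
  assumes "F {} = 0" "\<forall>i. v $ i \<ge> 0" "\<forall>A. sum (($) x) A \<le> c * F A"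
  shows "(\<Sum>i\<in>UNIV. v$i * x$i) \<le> c * lovasz_ext F v"
  using dominance[OF assms(1) _ _ _ assms(2,3)] sortlist_props[of v] by (simp add: lovasz_alt)

lemma telesc: "m \<le> n \<Longrightarrow> (\<Sum>k=m..<n. (f k::real) - f (Suc k)) = f m - f n"
  by (induction n) (auto simp: le_Suc_eq)

lemma in_take_nth: "distinct js \<Longrightarrow> m < length js \<Longrightarrow> (js ! m \<in> set (take j js)) = (m < j)"
proof
  assume d: "distinct js" and m: "m < length js" and h: "js ! m \<in> set (take j js)"
  then obtain t where t: "t < length (take j js)" "take j js ! t = js ! m" by (auto simp: in_set_conv_nth)
  then have "js ! t = js ! m" "t < j" "t < length js" by auto
  then show "m < j" using d m nth_eq_iff_index_eq by metis
next
  assume "distinct js" "m < length js" "m < j"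
  then show "js ! m \<in> set (take j js)" by (metis in_set_conv_nth length_take min_less_iff_conj nth_take)
qed

lemma convex_ball: "convex linf_ball"
proof (rule convexI)
  fix x y :: "real^'n" and u v :: real
  assume hx: "x \<in> linf_ball" and hy: "y \<in> linf_ball" and h: "0 \<le> u" "0 \<le> v" "u + v = 1"
  show "u *\<^sub>R x + v *\<^sub>R y \<in> linf_ball"
    unfolding linf_ball_def mem_Collect_eq
  proof
    fix i
    have b1: "\<bar>x $ i\<bar> \<le> 1" and b2: "\<bar>y $ i\<bar> \<le> 1" using hx hy by (auto simp: linf_ball_def)
    have "\<bar>u * x $ i + v * y $ i\<bar> \<le> u * \<bar>x $ i\<bar> + v * \<bar>y $ i\<bar>"
      using h by (metis abs_mult abs_of_nonneg abs_triangle_ineq)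
    also have "\<dots> \<le> u * 1 + v * 1"
      using h b1 b2 by (intro add_mono mult_left_mono) auto
    finally show "\<bar>(u *\<^sub>R x + v *\<^sub>R y) $ i\<bar> \<le> 1" using h by simp
  qed
qed

context
  fixes F :: "'n::finite set \<Rightarrow> real"
  assumes sub: "submodular F" and mono: "nondecreasing_setfun F" and F0: "F {} = 0"
    and pos1: "\<forall>k. F {k} > 0"
begin

lemma Fnn: "F A \<ge> 0"
  using mono F0 unfolding nondecreasing_setfun_def by (metis empty_subsetI)

lemma Fpos: "A \<noteq> {} \<Longrightarrow> F A > 0"
proof -
  assume "A \<noteq> {}"
  then obtain k where "k \<in> A" by blast
  then have "F {k} \<le> F A" using mono unfolding nondecreasing_setfun_def by auto
  then show ?thesis using pos1 by (meson less_le_trans)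
qed

lemma Fmono: "A \<subseteq> B \<Longrightarrow> F A \<le> F B"
  using mono unfolding nondecreasing_setfun_def by blast

lemma gP: "sum (($) (greedy F (sortlist v))) A \<le> F A"
  using greedy_P[OF sub F0] sortlist_props[of v] by blast

lemma gnn: "greedy F (sortlist v) $ i \<ge> 0"
  using greedy_nonneg[OF mono] sortlist_props[of v] by blast

lemma lov_upper:
  assumes "\<forall>i. v $ i \<ge> 0" "\<forall>A. sum (($) x) A \<le> c * F A"
  shows "(\<Sum>i\<in>UNIV. v$i * x$i) \<le> c * lovasz_ext F v"
  by (rule lov_dom[OF F0 assms])

lemma lov_upper1:
  assumes "\<forall>i. v $ i \<ge> 0" "\<forall>A. sum (($) x) A \<le> F A"
  shows "(\<Sum>i\<in>UNIV. v$i * x$i) \<le> lovasz_ext F v"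
  using lov_upper[OF assms(1), of x 1] assms(2) by simp

lemma lov_zero: "lovasz_ext F 0 = 0"
  by (simp add: lov_greedy)

lemma lov_hom:
  assumes c: "c \<ge> 0" and v: "\<forall>i. v $ i \<ge> 0"
  shows "lovasz_ext F (c *\<^sub>R v) = c * lovasz_ext F v"
proof -
  let ?g1 = "greedy F (sortlist (c *\<^sub>R v))" and ?g2 = "greedy F (sortlist v)"
  have cv: "\<forall>i. (c *\<^sub>R v) $ i \<ge> 0" using c v by simp
  have "lovasz_ext F (c *\<^sub>R v) = c * (\<Sum>i\<in>UNIV. v$i * ?g1$i)"
    by (simp add: lov_greedy sum_distrib_left algebra_simps)
  also have "\<dots> \<le> c * lovasz_ext F v"
    by (rule mult_left_mono[OF lov_upper1[OF v] c]) (use gP in blast)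
  finally have 1: "lovasz_ext F (c *\<^sub>R v) \<le> c * lovasz_ext F v" .
  have "c * lovasz_ext F v = (\<Sum>i\<in>UNIV. (c *\<^sub>R v)$i * ?g2$i)"
    by (simp add: lov_greedy sum_distrib_left algebra_simps)
  also have "\<dots> \<le> lovasz_ext F (c *\<^sub>R v)"
    by (rule lov_upper1[OF cv]) (use gP in blast)
  finally show ?thesis using 1 by simp
qed

lemma lov_mono_sub:
  assumes u: "\<forall>i. u $ i \<ge> 0" and v: "\<forall>i. v $ i \<ge> 0" and w: "\<forall>i. w $ i \<le> u $ i + v $ i"
    and w0: "\<forall>i. w $ i \<ge> 0"
  shows "lovasz_ext F w \<le> lovasz_ext F u + lovasz_ext F v"
proof -
  let ?g = "greedy F (sortlist w)"
  have "lovasz_ext F w = (\<Sum>i\<in>UNIV. w$i * ?g$i)" by (rule lov_greedy)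
  also have "\<dots> \<le> (\<Sum>i\<in>UNIV. u$i * ?g$i) + (\<Sum>i\<in>UNIV. v$i * ?g$i)"
    unfolding sum.distrib[symmetric]
    by (rule sum_mono) (use w gnn[of w] in \<open>auto simp: distrib_right[symmetric] intro: mult_right_mono\<close>)
  also have "\<dots> \<le> lovasz_ext F u + lovasz_ext F v"
    by (rule add_mono; rule lov_upper1) (use u v gP in auto)
  finally show ?thesis .
qed

lemma vabs_nn: "\<forall>i. vabs w $ i \<ge> 0"
  by (simp add: vabs_def)

lemma norm_part: "is_norm_fun (\<lambda>w. lovasz_ext F (vabs w))"
  unfolding is_norm_fun_def
proof (intro conjI allI)
  fix w :: "real^'n"
  show "(lovasz_ext F (vabs w) = 0) = (w = 0)"
  proof
    assume h: "lovasz_ext F (vabs w) = 0"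
    show "w = 0"
    proof (rule ccontr)
      assume "w \<noteq> 0"
      then obtain i where wi: "w $ i \<noteq> 0" by (metis vec_eq_iff zero_index)
      define x :: "real^'n" where "x = (\<chi> j. if j = i then F {i} else 0)"
      have P: "\<forall>A. sum (($) x) A \<le> F A"
      proof
        fix A
        show "sum (($) x) A \<le> F A"
        proof (cases "i \<in> A")
          case True
          have "sum (($) x) A = F {i}" unfolding x_def using True
            by (simp add: sum.delta)
          also have "\<dots> \<le> F A" using True by (intro Fmono) auto
          finally show ?thesis .
        next
          case False
          then have "sum (($) x) A = 0" unfolding x_def by (simp add: sum.delta)
          then show ?thesis using Fnn by simp
        qed
      qed
      have "(\<Sum>j\<in>UNIV. vabs w $ j * x $ j) = \<bar>w $ i\<bar> * F {i}"
        unfolding x_def by (simp add: vabs_def if_distrib cong: if_cong)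
      moreover have "\<bar>w $ i\<bar> * F {i} > 0" using wi pos1 by simp
      ultimately show False using lov_upper1[OF vabs_nn[of w] P] h by simp
    qed
  next
    assume "w = 0"
    then have "vabs w = 0" by (simp add: vabs_def vec_eq_iff)
    then show "lovasz_ext F (vabs w) = 0" by (simp add: lov_zero)
  qed
next
  fix a :: real and w :: "real^'n"
  have "vabs (a *\<^sub>R w) = \<bar>a\<bar> *\<^sub>R vabs w" by (simp add: vabs_def vec_eq_iff abs_mult)
  then show "lovasz_ext F (vabs (a *\<^sub>R w)) = \<bar>a\<bar> * lovasz_ext F (vabs w)"
    using lov_hom[OF abs_ge_zero vabs_nn] by simp
next
  fix v w :: "real^'n"
  show "lovasz_ext F (vabs (v + w)) \<le> lovasz_ext F (vabs v) + lovasz_ext F (vabs w)"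
    by (rule lov_mono_sub) (auto simp: vabs_def abs_triangle_ineq)
qed

lemma lov_le_supp:
  assumes "\<forall>i. 0 \<le> v $ i \<and> v $ i \<le> 1"
  shows "lovasz_ext F v \<le> F (supp v)"
proof -
  let ?g = "greedy F (sortlist v)"
  have "lovasz_ext F v = (\<Sum>i\<in>UNIV. v$i * ?g$i)" by (rule lov_greedy)
  also have "\<dots> \<le> (\<Sum>i\<in>UNIV. if i \<in> supp v then ?g$i else 0)"
  proof (rule sum_mono)
    fix i
    have "v$i * ?g$i \<le> 1 * ?g$i" using assms gnn[of v i] by (intro mult_right_mono) auto
    then show "v$i * ?g$i \<le> (if i \<in> supp v then ?g$i else 0)" by (auto simp: supp_def)
  qed
  also have "\<dots> = sum (($) ?g) (supp v)"
    using sum.inter_restrict[of UNIV "($) ?g" "supp v"] by simp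
  also have "\<dots> \<le> F (supp v)" by (rule gP)
  finally show ?thesis .
qed

lemma Om_convex: "convex_on linf_ball (\<lambda>w. lovasz_ext F (vabs w))"
  unfolding convex_on_def
proof (intro conjI convex_ball ballI allI impI)
  fix x y :: "real^'n" and u v :: real
  assume h: "0 \<le> u" "0 \<le> v" "u + v = 1"
  have N: "is_norm_fun (\<lambda>w. lovasz_ext F (vabs w))" by (rule norm_part)
  have "lovasz_ext F (vabs (u *\<^sub>R x + v *\<^sub>R y)) \<le> lovasz_ext F (vabs (u *\<^sub>R x)) + lovasz_ext F (vabs (v *\<^sub>R y))"
    using N unfolding is_norm_fun_def by blast
  also have "\<dots> = \<bar>u\<bar> * lovasz_ext F (vabs x) + \<bar>v\<bar> * lovasz_ext F (vabs y)"
    using N unfolding is_norm_fun_def by simp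
  finally show "lovasz_ext F (vabs (u *\<^sub>R x + v *\<^sub>R y)) \<le> u * lovasz_ext F (vabs x) + v * lovasz_ext F (vabs y)"
    using h by simp
qed

lemma Om_le_g: "w \<in> linf_ball \<Longrightarrow> lovasz_ext F (vabs w) \<le> F (supp w)"
proof -
  assume "w \<in> linf_ball"
  then have "\<forall>i. 0 \<le> vabs w $ i \<and> vabs w $ i \<le> 1" by (auto simp: linf_ball_def vabs_def)
  moreover have "supp (vabs w) = supp w" by (auto simp: supp_def vabs_def)
  ultimately show ?thesis using lov_le_supp by metis
qed

lemma env_lower:
  assumes hc: "convex_on linf_ball h" and hg: "\<forall>w\<in>linf_ball. h w \<le> F (supp w)"
    and w: "w \<in> linf_ball"
  shows "h w \<le> lovasz_ext F (vabs w)"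
proof -
  let ?v = "vabs w"
  let ?js = "sortlist ?v"
  have d: "distinct ?js" and u: "set ?js = UNIV" and so: "sorted_wrt (\<lambda>a b. ?v $ a \<ge> ?v $ b) ?js"
    using sortlist_props[of ?v] by auto
  define n where "n = length ?js"
  define a where "a = coef ?js ?v"
  define A where "A k = set (take (Suc k) ?js)" for k
  define lam where "lam k = (if k < n then a k - a (Suc k) else 1 - a 0)" for k
  define q where "q k = (if k < n then (\<chi> i. if i \<in> A k then sgn (w$i) else 0) else (0::real^'n))" for k
  have wb: "\<bar>w $ i\<bar> \<le> 1" for i using w by (auto simp: linf_ball_def)
  have an: "a n = 0" by (simp add: a_def coef_def n_def)
  have a0: "a 0 \<le> 1" using wb by (simp add: a_def coef_def vabs_def)
  have lam_nn: "lam k \<ge> 0" for k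
    using mu_nonneg[OF so vabs_nn, of k] a0 unfolding lam_def a_def n_def by auto
  have lam_sum: "(\<Sum>k<Suc n. lam k) = 1"
  proof -
    have "(\<Sum>k<n. lam k) = (\<Sum>k<n. a k - a (Suc k))" by (rule sum.cong) (auto simp: lam_def)
    also have "\<dots> = a 0 - a n" by (rule sum_lessThan_telescope')
    finally show ?thesis using an by (simp add: lam_def)
  qed
  have q_ball: "q k \<in> linf_ball" for k
    by (auto simp: q_def linf_ball_def sgn_real_def)
  have comb: "(\<Sum>k<Suc n. lam k *\<^sub>R q k) = w"
  proof (subst vec_eq_iff, rule allI)
    fix i
    have "i \<in> set ?js" using u by simp
    then obtain m where m: "m < n" "i = ?js ! m" by (auto simp: in_set_conv_nth n_def)
    have mlen: "m < length ?js" using m n_def by simp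
    have "(\<Sum>k<Suc n. lam k *\<^sub>R q k) $ i = (\<Sum>k<n. lam k * q k $ i)"
      by (simp add: q_def)
    also have "\<dots> = (\<Sum>k<n. if k \<in> {m..} then (a k - a (Suc k)) * sgn (w$i) else 0)"
      by (rule sum.cong) (auto simp: lam_def q_def A_def m(2) in_take_nth[OF d mlen] n_def)
    also have "\<dots> = (\<Sum>k\<in>{..<n} \<inter> {m..}. (a k - a (Suc k)) * sgn (w$i))"
      by (rule sum.inter_restrict[symmetric]) simp
    also have "{..<n} \<inter> {m..} = {m..<n}" by auto
    also have "(\<Sum>k\<in>{m..<n}. (a k - a (Suc k)) * sgn (w$i)) = (a m - a n) * sgn (w$i)"
      using telesc[of m n a] m by (simp add: sum_distrib_right[symmetric])
    also have "\<dots> = w $ i" using m an by (simp add: a_def coef_def n_def vabs_def abs_mult_sgn)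
    finally show "(\<Sum>k<Suc n. lam k *\<^sub>R q k) $ i = w $ i" .
  qed
  have "h w = h (\<Sum>k<Suc n. lam k *\<^sub>R q k)" using comb by simp
  also have "\<dots> \<le> (\<Sum>k<Suc n. lam k * h (q k))"
    by (rule convex_on_sum[OF _ _ hc]) (use lam_sum lam_nn q_ball in auto)
  also have "\<dots> \<le> (\<Sum>k<Suc n. lam k * (if k < n then F (A k) else 0))"
  proof (rule sum_mono, rule mult_left_mono[OF _ lam_nn])
    fix k
    show "h (q k) \<le> (if k < n then F (A k) else 0)"
    proof (cases "k < n")
      case True
      have "supp (q k) \<subseteq> A k" using True by (auto simp: supp_def q_def)
      then have "F (supp (q k)) \<le> F (A k)" by (rule Fmono)
      then show ?thesis using hg q_ball[of k] True by force
    next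
      case False
      have "supp (q k) = {}" using False by (simp add: supp_def q_def)
      then show ?thesis using hg q_ball[of k] False F0 by force
    qed
  qed
  also have "\<dots> = (\<Sum>k<n. (a k - a (Suc k)) * F (A k))"
    by (simp add: lam_def)
  also have "\<dots> = lovasz_ext F ?v"
    using ext_mu[of F ?js ?v, OF F0] by (simp add: lovasz_alt a_def A_def n_def)
  finally show ?thesis .
qed

lemma envelope_part: "convex_envelope_on linf_ball (\<lambda>w. F (supp w)) (\<lambda>w. lovasz_ext F (vabs w))"
  unfolding convex_envelope_on_def
  using Om_convex Om_le_g env_lower by blast

lemma subadd: "finite P \<Longrightarrow> F (\<Union>C\<in>P. g C) \<le> (\<Sum>C\<in>P. F (g C))"
proof (induction P rule: finite_induct)
  case empty
  then show ?case using F0 by simp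
next
  case (insert x P)
  have "F (g x \<union> (\<Union>C\<in>P. g C)) + F (g x \<inter> (\<Union>C\<in>P. g C)) \<le> F (g x) + F (\<Union>C\<in>P. g C)"
    using sub unfolding submodular_def by blast
  then have "F (g x \<union> (\<Union>C\<in>P. g C)) \<le> F (g x) + F (\<Union>C\<in>P. g C)" using Fnn[of "g x \<inter> (\<Union>C\<in>P. g C)"] by linarith
  then show ?case using insert by simp
qed

lemma dual_basic:
  fixes s :: "real^'n"
  assumes r_def: "r = (\<lambda>A. (\<Sum>i\<in>A. \<bar>s $ i\<bar>) / F A)"
  assumes M_def: "M = Max {r A | A. A \<noteq> {}}"
  shows "finite {r A | A. A \<noteq> {}}" "\<And>A. A \<noteq> {} \<Longrightarrow> r A \<le> M" "\<exists>A. A \<noteq> {} \<and> r A = M"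
    "M \<ge> 0" "\<And>A. (\<Sum>i\<in>A. \<bar>s $ i\<bar>) \<le> M * F A"
proof -
  have eq: "{r A | A. A \<noteq> {}} = r ` {A. A \<noteq> {}}" by auto
  show fin: "finite {r A | A. A \<noteq> {}}" unfolding eq by simp
  have ne: "{r A | A. A \<noteq> {}} \<noteq> {}" by auto
  show le: "\<And>A. A \<noteq> {} \<Longrightarrow> r A \<le> M" unfolding M_def by (rule Max_ge[OF fin]) auto
  have "M \<in> {r A | A. A \<noteq> {}}" unfolding M_def by (rule Max_in[OF fin ne])
  then show ex: "\<exists>A. A \<noteq> {} \<and> r A = M" by auto
  then obtain A0 where "A0 \<noteq> {}" "r A0 = M" by blast
  moreover have "r A0 \<ge> 0" unfolding r_def using Fnn by (intro divide_nonneg_nonneg sum_nonneg) auto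
  ultimately show M0: "M \<ge> 0" by simp
  fix A
  show "(\<Sum>i\<in>A. \<bar>s $ i\<bar>) \<le> M * F A"
  proof (cases "A = {}")
    case True
    then show ?thesis using F0 by simp
  next
    case False
    then have "r A \<le> M" "F A > 0" using le Fpos by auto
    then show ?thesis unfolding r_def by (simp add: pos_divide_le_eq)
  qed
qed

lemma dual_part:
  fixes s :: "real^'n"
  defines "Om \<equiv> \<lambda>w. lovasz_ext F (vabs w)"
  defines "M \<equiv> Max {(\<Sum>i\<in>A. \<bar>s $ i\<bar>) / F A | A. A \<noteq> {}}"
  shows "(\<exists>w. Om w \<le> 1 \<and> s \<bullet> w = dual_norm Om s) \<and> (\<forall>w. Om w \<le> 1 \<longrightarrow> s \<bullet> w \<le> dual_norm Om s)
         \<and> dual_norm Om s = M"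
proof -
  define r where "r = (\<lambda>A. (\<Sum>i\<in>A. \<bar>s $ i\<bar>) / F A)"
  have M_def': "M = Max {r A | A. A \<noteq> {}}" unfolding M_def r_def by simp
  note B = dual_basic[OF r_def M_def']
  have P: "\<forall>A. sum (($) (vabs s)) A \<le> M * F A" using B(5) by (simp add: vabs_def)
  have ub: "s \<bullet> w \<le> M" if "Om w \<le> 1" for w
  proof -
    have "s \<bullet> w = (\<Sum>i\<in>UNIV. s $ i * w $ i)" by (simp add: inner_vec_def)
    also have "\<dots> \<le> (\<Sum>i\<in>UNIV. vabs w $ i * vabs s $ i)"
      by (rule sum_mono) (simp add: vabs_def abs_mult[symmetric] mult.commute)
    also have "\<dots> \<le> M * Om w" unfolding Om_def by (rule lov_upper[OF vabs_nn P])
    also have "\<dots> \<le> M" using that B(4) by (simp add: mult_left_le)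
    finally show ?thesis .
  qed
  obtain A0 where A0: "A0 \<noteq> {}" "(\<Sum>i\<in>A0. \<bar>s $ i\<bar>) / F A0 = M" using B(3) by (auto simp: r_def)
  have FA0: "F A0 > 0" using Fpos A0 by simp
  define w0 :: "real^'n" where "w0 = (\<chi> i. if i \<in> A0 then (if s $ i \<ge> 0 then 1 else -1) / F A0 else 0)"
  define e :: "real^'n" where "e = (\<chi> i. if i \<in> A0 then 1 else 0)"
  have sw0: "s \<bullet> w0 = M"
  proof -
    have "s \<bullet> w0 = (\<Sum>i\<in>UNIV. if i \<in> A0 then \<bar>s $ i\<bar> / F A0 else 0)"
      unfolding inner_vec_def w0_def by (rule sum.cong) auto
    also have "\<dots> = (\<Sum>i\<in>A0. \<bar>s $ i\<bar> / F A0)"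
      using sum.inter_restrict[of UNIV "\<lambda>i. \<bar>s $ i\<bar> / F A0" A0] by simp
    also have "\<dots> = M" using A0 by (simp add: sum_divide_distrib)
    finally show ?thesis .
  qed
  have "vabs w0 = (1 / F A0) *\<^sub>R e" using FA0 by (simp add: vabs_def w0_def e_def vec_eq_iff)
  then have "Om w0 = (1 / F A0) * lovasz_ext F e"
    unfolding Om_def using FA0 by (simp add: lov_hom e_def)
  also have "\<dots> \<le> (1 / F A0) * F (supp e)"
    using FA0 by (intro mult_left_mono lov_le_supp) (auto simp: e_def)
  also have "supp e = A0" by (auto simp: supp_def e_def)
  finally have Ow0: "Om w0 \<le> 1" using FA0 by simp
  have dn: "dual_norm Om s = M"
    unfolding dual_norm_def
    by (rule cSup_eq_maximum) (use Ow0 sw0 ub in auto)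
  show ?thesis using dn Ow0 sw0 ub by auto
qed

lemma T_part:
  fixes s :: "real^'n"
  shows "Max {(\<Sum>i\<in>A. \<bar>s $ i\<bar>) / F A | A. A \<in> stable_inseparable_family F}
       = Max {(\<Sum>i\<in>A. \<bar>s $ i\<bar>) / F A | A. A \<noteq> {}}"
proof -
  define r where "r = (\<lambda>A. (\<Sum>i\<in>A. \<bar>s $ i\<bar>) / F A)"
  define M where "M = Max {r A | A. A \<noteq> {}}"
  define S where "S = (\<lambda>A. (\<Sum>i\<in>A. \<bar>s $ i\<bar>))"
  note DB = dual_basic[OF r_def M_def]
  have B5: "\<And>A. S A \<le> M * F A" unfolding S_def by (rule DB(5))
  note B = DB(1-4) B5
  obtain A1 where "A1 \<noteq> {} \<and> r A1 = M" using B(3) by blast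
  then have "\<exists>A. (A \<noteq> {} \<and> r A = M) \<and> (\<forall>C. C \<noteq> {} \<and> r C = M \<longrightarrow> card A \<le> card C)"
    by (rule ex_has_least_nat)
  then obtain A where A: "A \<noteq> {}" "r A = M" and Amin0: "\<forall>C. C \<noteq> {} \<and> r C = M \<longrightarrow> card A \<le> card C"
    by blast
  have Amin: "\<And>C. C \<noteq> {} \<and> r C = M \<Longrightarrow> card A \<le> card C" using Amin0 by blast
  have FA: "F A > 0" using Fpos A by simp
  have SA: "S A = M * F A" using A FA unfolding r_def S_def by (simp add: field_simps)
  obtain B0 where B0: "A \<subseteq> B0" "F B0 = F A" and Bmax: "\<And>C. A \<subseteq> C \<and> F C = F A \<Longrightarrow> card C \<le> card B0"
  proof -
    have "\<forall>C. A \<subseteq> C \<and> F C = F A \<longrightarrow> card C < Suc CARD('n)"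
      using card_mono[OF finite[of "UNIV::'n set"] subset_UNIV] by (simp add: less_Suc_eq_le)
    from ex_has_greatest_nat[of "\<lambda>C. A \<subseteq> C \<and> F C = F A" A card, OF _ this] that show ?thesis by blast
  qed
  have Bne: "B0 \<noteq> {}" using A B0 by auto
  have stab: "stable_set F B0"
    unfolding stable_set_def
  proof (intro allI impI)
    fix C assume "B0 \<subset> C"
    then have "F B0 \<le> F C" "card B0 < card C" using Fmono psubset_card_mono[OF finite] by auto
    moreover have "A \<subseteq> C" using B0 \<open>B0 \<subset> C\<close> by auto
    moreover have "F C \<noteq> F B0"
    proof
      assume "F C = F B0"
      then have "card C \<le> card B0" using Bmax[of C] B0 \<open>A \<subseteq> C\<close> by simp
      then show False using \<open>card B0 < card C\<close> by simp
    qed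
    ultimately show "F B0 < F C" by simp
  qed
  have insep: "inseparable_set F B0"
    unfolding inseparable_set_def separable_set_def
  proof (intro conjI Bne notI)
    assume "B0 \<noteq> {} \<and> (\<exists>P. finite P \<and> \<Union>P = B0 \<and> {} \<notin> P \<and> 2 \<le> card P \<and>
          (\<forall>B\<in>P. \<forall>C\<in>P. B \<noteq> C \<longrightarrow> B \<inter> C = {}) \<and> F B0 = (\<Sum>B\<in>P. F B))"
    then obtain P where P: "finite P" "\<Union>P = B0" "{} \<notin> P" "2 \<le> card P"
      "\<forall>B\<in>P. \<forall>C\<in>P. B \<noteq> C \<longrightarrow> B \<inter> C = {}" "F B0 = (\<Sum>B\<in>P. F B)" by (elim conjE exE) blast
    have UA: "(\<Union>C\<in>P. A \<inter> C) = A" using P(2) B0(1) by auto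
    have "F A \<le> (\<Sum>C\<in>P. F (A \<inter> C))" using subadd[OF P(1), of "\<lambda>C. A \<inter> C"] UA by simp
    then have "(\<Sum>C\<in>P. F C - F (A \<inter> C)) \<le> 0" using P(6) B0(2) by (simp add: sum_subtractf)
    moreover have nn1: "\<And>C. C \<in> P \<Longrightarrow> F C - F (A \<inter> C) \<ge> 0"
    proof -
      fix C show "F C - F (A \<inter> C) \<ge> 0" using Fmono[of "A \<inter> C" C] by simp
    qed
    moreover have "(\<Sum>C\<in>P. F C - F (A \<inter> C)) \<ge> 0" by (rule sum_nonneg) (use nn1 in auto)
    ultimately have "(\<Sum>C\<in>P. F C - F (A \<inter> C)) = 0" by linarith
    then have eqC: "\<And>C. C \<in> P \<Longrightarrow> F (A \<inter> C) = F C" using sum_nonneg_eq_0_iff[OF P(1) nn1] by simp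
    have neC: "\<And>C. C \<in> P \<Longrightarrow> A \<inter> C \<noteq> {}"
    proof -
      fix C assume "C \<in> P"
      then have "C \<noteq> {}" using P(3) by blast
      then have "F C > 0" by (rule Fpos)
      then show "A \<inter> C \<noteq> {}" using eqC[OF \<open>C \<in> P\<close>] F0 by auto
    qed
    have sumF: "(\<Sum>C\<in>P. F (A \<inter> C)) = F A" using eqC P(6) B0(2) by simp
    have disj: "\<forall>C\<in>P. \<forall>D\<in>P. C \<noteq> D \<longrightarrow> (A \<inter> C) \<inter> (A \<inter> D) = {}" using P(5) by blast
    have "sum (\<lambda>i. \<bar>s $ i\<bar>) (\<Union>((\<lambda>C. A \<inter> C) ` P)) = (\<Sum>C\<in>P. sum (\<lambda>i. \<bar>s $ i\<bar>) (A \<inter> C))"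
      by (rule sum.UNION_disjoint[OF P(1)]) (use disj in auto)
    then have SU: "S A = (\<Sum>C\<in>P. S (A \<inter> C))" unfolding S_def using UA by simp
    have nn2: "\<And>C. C \<in> P \<Longrightarrow> M * F (A \<inter> C) - S (A \<inter> C) \<ge> 0" using B(5) by simp
    have "(\<Sum>C\<in>P. M * F (A \<inter> C) - S (A \<inter> C)) = M * F A - S A"
      by (simp add: sum_subtractf sum_distrib_left[symmetric] sumF SU)
    then have "(\<Sum>C\<in>P. M * F (A \<inter> C) - S (A \<inter> C)) = 0" using SA by simp
    then have eqS: "\<And>C. C \<in> P \<Longrightarrow> S (A \<inter> C) = M * F (A \<inter> C)"
      using sum_nonneg_eq_0_iff[OF P(1) nn2] by simp
    have "\<not> card P \<le> Suc 0" using P(4) by simp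
    then obtain C1 C2 where C: "C1 \<in> P" "C2 \<in> P" "C1 \<noteq> C2" using card_le_Suc0_iff_eq[OF P(1)] by blast
    have "A \<inter> C1 \<subset> A"
    proof -
      obtain x where "x \<in> A \<inter> C2" using neC[OF C(2)] by blast
      then have "x \<notin> C1" using P(5) C by blast
      then show ?thesis using \<open>x \<in> A \<inter> C2\<close> by blast
    qed
    then have cl: "card (A \<inter> C1) < card A" by (rule psubset_card_mono[OF finite])
    have "F (A \<inter> C1) > 0" using Fpos neC[OF C(1)] by simp
    then have "r (A \<inter> C1) = M" using eqS[OF C(1)] unfolding r_def S_def by simp
    then show False using Amin[of "A \<inter> C1"] neC[OF C(1)] cl by simp
  qed
  have BT: "B0 \<in> stable_inseparable_family F"
    unfolding stable_inseparable_family_def using Bne stab insep by blast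
  have rB: "r B0 = M"
  proof -
    have "S A \<le> S B0" unfolding S_def by (rule sum_mono2[OF finite B0(1)]) simp
    then have "r A \<le> r B0" unfolding r_def S_def using B0(2) FA by (simp add: divide_right_mono)
    then show ?thesis using B(2)[OF Bne] A by simp
  qed
  have fT: "finite {r A | A. A \<in> stable_inseparable_family F}"
  proof -
    have "{r A | A. A \<in> stable_inseparable_family F} = r ` stable_inseparable_family F" by auto
    then show ?thesis by simp
  qed
  have "Max {r A | A. A \<in> stable_inseparable_family F} = M"
  proof (rule Max_eqI[OF fT])
    fix y assume "y \<in> {r A | A. A \<in> stable_inseparable_family F}"
    then show "y \<le> M" using B(2) by (auto simp: stable_inseparable_family_def)
  next
    show "M \<in> {r A | A. A \<in> stable_inseparable_family F}" using BT rB by blast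
  qed
  then show ?thesis unfolding r_def M_def .
qed

end

theorem proposition1:
  fixes F :: "'n::finite set \<Rightarrow> real"
    and \<Omega> :: "real^'n \<Rightarrow> real"
  assumes "submodular F"
    and "nondecreasing_setfun F"
    and "F {} = 0"
    and "\<forall>k. F {k} > 0"
    and "\<forall>w. \<Omega> w = lovasz_ext F (vabs w)"
  shows "is_norm_fun \<Omega> \<and>
         convex_envelope_on linf_ball (\<lambda>w. F (supp w)) \<Omega> \<and>
         (\<forall>s. (\<exists>w. \<Omega> w \<le> 1 \<and> s \<bullet> w = dual_norm \<Omega> s) \<and>
             (\<forall>w. \<Omega> w \<le> 1 \<longrightarrow> s \<bullet> w \<le> dual_norm \<Omega> s) \<and>
             dual_norm \<Omega> s = Max {(\<Sum>i\<in>A. \<bar>s $ i\<bar>) / F A | A. A \<noteq> {}} \<and>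
             dual_norm \<Omega> s = Max {(\<Sum>i\<in>A. \<bar>s $ i\<bar>) / F A | A. A \<in> stable_inseparable_family F})"
proof -
  have Om: "\<Omega> = (\<lambda>w. lovasz_ext F (vabs w))" using assms(5) by auto
  have N: "is_norm_fun \<Omega>" unfolding Om by (rule norm_part[OF assms(1-4)])
  have E: "convex_envelope_on linf_ball (\<lambda>w. F (supp w)) \<Omega>" unfolding Om by (rule envelope_part[OF assms(1-4)])
  have D: "(\<exists>w. \<Omega> w \<le> 1 \<and> s \<bullet> w = dual_norm \<Omega> s) \<and>
             (\<forall>w. \<Omega> w \<le> 1 \<longrightarrow> s \<bullet> w \<le> dual_norm \<Omega> s) \<and>
             dual_norm \<Omega> s = Max {(\<Sum>i\<in>A. \<bar>s $ i\<bar>) / F A | A. A \<noteq> {}} \<and>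
             dual_norm \<Omega> s = Max {(\<Sum>i\<in>A. \<bar>s $ i\<bar>) / F A | A. A \<in> stable_inseparable_family F}" for s
    using dual_part[OF assms(1-4), where s=s] T_part[OF assms(1-4), where s=s] unfolding Om by (intro conjI; (elim conjE)?; (assumption | simp))
  show ?thesis using N E D by blast
qed

end
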